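(* Two proper subspaces $W_1,W_2$ of $\mathbb{R}^N$ do norm retrieval if and only if they are orthogonal complements of each other, i.e. $W_2=W_1^\perp$.
   Context: A family of subspaces $\{W_i\}_{i=1}^M$ of $\mathbb{R}^N$ with orthogonal projections $\{P_i\}_{i=1}^M$ does norm retrieval if for all $x,y\in\mathbb{R}^N$, $\|P_ix\|=\|P_iy\|$ for all $i\in\{1,\dots,M\}$ implies $\|x\|=\|y\|$. A proper subspace is a subspace different from $\mathbb{R}^N$. *)

theory Defs
  imports "HOL-Analysis.Analysis"
begin

definition orth_proj :: "'a::euclidean_space set \<Rightarrow> 'a \<Rightarrow> 'a" where
  "orth_proj W x = (THE p. p \<in> W \<and> x - p \<in> orthogonal_comp W)"

definition norm_retrieval :: "'i set \<Rightarrow> ('i \<Rightarrow> 'a::euclidean_space set) \<Rightarrow> bool" where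
  "norm_retrieval I W \<longleftrightarrow>
     (\<forall>x y. (\<forall>i\<in>I. norm (orth_proj (W i) x) = norm (orth_proj (W i) y)) \<longrightarrow> norm x = norm y)"

end

theory Submission
  imports Defs
begin

lemma op_char:
  fixes W :: "'a::euclidean_space set"
  assumes "subspace W"
  shows "orth_proj W x \<in> W \<and> x - orth_proj W x \<in> orthogonal_comp W"
proof -
  have "x \<in> W + orthogonal_comp W" using subspace_sum_orthogonal_comp[OF assms] by simp
  then obtain p q where pq: "x = p + q" "p \<in> W" "q \<in> orthogonal_comp W"
    by (rule set_plus_elim)
  have ex: "p \<in> W \<and> x - p \<in> orthogonal_comp W" using pq by simp
  have un: "r = p" if "r \<in> W \<and> x - r \<in> orthogonal_comp W" for r
  proof -
    have "p - r \<in> W" by (rule subspace_diff[OF assms pq(2) conjunct1[OF that]])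
    moreover have "p - r \<in> orthogonal_comp W"
    proof -
      have "(x - r) - (x - p) \<in> orthogonal_comp W"
        by (rule subspace_diff[OF subspace_orthogonal_comp conjunct2[OF that] conjunct2[OF ex]])
      then show ?thesis by simp
    qed
    ultimately have "p - r \<in> W \<inter> orthogonal_comp W" by (rule IntI)
    then have "p - r = 0" unfolding orthogonal_Int_0[OF assms] by simp
    then show ?thesis by simp
  qed
  have "orth_proj W x = p"
    unfolding orth_proj_def
    using ex un by (rule the_equality)
  then show ?thesis using ex by simp
qed

lemma op_unique:
  fixes W :: "'a::euclidean_space set"
  assumes "subspace W" "p \<in> W" "x - p \<in> orthogonal_comp W"
  shows "orth_proj W x = p"
proof -
  have c: "orth_proj W x \<in> W \<and> x - orth_proj W x \<in> orthogonal_comp W"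
    using op_char[OF assms(1)] .
  have "p - orth_proj W x \<in> W" by (rule subspace_diff[OF assms(1,2) conjunct1[OF c]])
  moreover have "(x - orth_proj W x) - (x - p) \<in> orthogonal_comp W"
    by (rule subspace_diff[OF subspace_orthogonal_comp conjunct2[OF c] assms(3)])
  then have "p - orth_proj W x \<in> orthogonal_comp W" by simp
  ultimately have "p - orth_proj W x \<in> W \<inter> orthogonal_comp W" by (rule IntI)
  then have "p - orth_proj W x = 0" unfolding orthogonal_Int_0[OF assms(1)] by simp
  then show ?thesis by simp
qed

lemma orth_comp_inner:
  "x \<in> orthogonal_comp W \<Longrightarrow> y \<in> W \<Longrightarrow> x \<bullet> y = 0"
  unfolding orthogonal_comp_def orthogonal_def by (simp add: inner_commute[of x y])

lemma pyth2:
  fixes a b :: "'a::euclidean_space"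
  assumes "a \<bullet> b = 0"
  shows "norm (a + b) ^ 2 = norm a ^ 2 + norm b ^ 2"
  using assms unfolding power2_norm_eq_inner
  by (simp add: inner_add_left inner_add_right inner_commute[of b a])

lemma op_pyth:
  fixes W :: "'a::euclidean_space set"
  assumes "subspace W"
  shows "norm x ^ 2 = norm (orth_proj W x) ^ 2 + norm (x - orth_proj W x) ^ 2"
proof -
  have c: "orth_proj W x \<in> W \<and> x - orth_proj W x \<in> orthogonal_comp W"
    using op_char[OF assms] .
  then have "(x - orth_proj W x) \<bullet> orth_proj W x = 0" using orth_comp_inner[of _ W] by simp
  then have "norm (orth_proj W x + (x - orth_proj W x)) ^ 2
      = norm (orth_proj W x) ^ 2 + norm (x - orth_proj W x) ^ 2"
    using pyth2[of "orth_proj W x" "x - orth_proj W x"] by (simp add: inner_commute)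
  then show ?thesis by simp
qed

lemma op_le:
  fixes W :: "'a::euclidean_space set"
  assumes "subspace W"
  shows "norm (orth_proj W x) ^ 2 \<le> norm x ^ 2"
  using op_pyth[OF assms, of x] by simp

lemma op_zero_iff:
  fixes W :: "'a::euclidean_space set"
  assumes "subspace W"
  shows "orth_proj W x = 0 \<longleftrightarrow> x \<in> orthogonal_comp W"
proof
  assume "orth_proj W x = 0" then show "x \<in> orthogonal_comp W"
    using op_char[OF assms, of x] by simp
next
  assume "x \<in> orthogonal_comp W" then show "orth_proj W x = 0"
    using op_unique[OF assms, of 0 x] assms by (simp add: subspace_0)
qed

lemma op_lin:
  fixes W :: "'a::euclidean_space set"
  assumes "subspace W"
  shows "orth_proj W (a *\<^sub>R x + b *\<^sub>R y) = a *\<^sub>R orth_proj W x + b *\<^sub>R orth_proj W y"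
proof (rule op_unique[OF assms])
  have cx: "orth_proj W x \<in> W \<and> x - orth_proj W x \<in> orthogonal_comp W"
    using op_char[OF assms] .
  have cy: "orth_proj W y \<in> W \<and> y - orth_proj W y \<in> orthogonal_comp W"
    using op_char[OF assms] .
  show "a *\<^sub>R orth_proj W x + b *\<^sub>R orth_proj W y \<in> W"
    using cx cy assms by (simp add: subspace_add subspace_scale)
  have "a *\<^sub>R (x - orth_proj W x) + b *\<^sub>R (y - orth_proj W y) \<in> orthogonal_comp W"
    using cx cy subspace_orthogonal_comp by (meson subspace_add subspace_mul)
  then show "a *\<^sub>R x + b *\<^sub>R y - (a *\<^sub>R orth_proj W x + b *\<^sub>R orth_proj W y) \<in> orthogonal_comp W"
    by (simp add: algebra_simps)
qed

lemma comp_nonzero: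
  fixes W :: "'a::euclidean_space set"
  assumes "subspace W" "W \<noteq> UNIV"
  obtains v where "v \<in> orthogonal_comp W" "v \<noteq> 0"
proof -
  have "orthogonal_comp W \<noteq> {0}"
  proof
    assume "orthogonal_comp W = {0}"
    then have "orthogonal_comp (orthogonal_comp W) = UNIV" by simp
    then show False using orthogonal_comp_self[OF assms(1)] assms(2) by simp
  qed
  moreover have "0 \<in> orthogonal_comp W" by (rule subspace_0[OF subspace_orthogonal_comp])
  ultimately obtain v where "v \<in> orthogonal_comp W" "v \<noteq> 0" by auto
  then show ?thesis by (rule that)
qed

lemma norm_comb_sq:
  "norm (s *\<^sub>R v + t *\<^sub>R (w::'a::euclidean_space)) ^ 2 = s^2 * norm v ^ 2 + t^2 * norm w ^ 2 + 2 * (s * t * (v \<bullet> w))"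
  unfolding power2_norm_eq_inner
  by (simp add: inner_add_left inner_add_right inner_commute[of w v] power2_eq_square algebra_simps)

lemma div_sq_ge: "n2 ^ 2 \<le> nv ^ 2 \<Longrightarrow> n2 > 0 \<Longrightarrow> (b / n2)^2 * nv ^ 2 \<ge> (b::real)^2"
  by (simp add: power_divide divide_simps mult_left_mono)

theorem mainTheorem2:
  fixes W1 W2 :: "(real ^ 'n) set"
  assumes "subspace W1" and "subspace W2"
    and "W1 \<noteq> UNIV" and "W2 \<noteq> UNIV"
  shows "norm_retrieval {1::nat, 2} (\<lambda>i. if i = 1 then W1 else W2)
         \<longleftrightarrow> W2 = orthogonal_comp W1"
proof -
  let ?P1 = "orth_proj W1" and ?P2 = "orth_proj W2"
  have NR: "norm_retrieval {1::nat, 2} (\<lambda>i. if i = 1 then W1 else W2) \<longleftrightarrow>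
    (\<forall>x y. norm (?P1 x) = norm (?P1 y) \<and> norm (?P2 x) = norm (?P2 y) \<longrightarrow> norm x = norm y)"
    unfolding norm_retrieval_def by simp
  show ?thesis
  proof
    assume "norm_retrieval {1::nat, 2} (\<lambda>i. if i = 1 then W1 else W2)"
    then have nr: "\<And>x y. norm (?P1 x) = norm (?P1 y) \<Longrightarrow> norm (?P2 x) = norm (?P2 y) \<Longrightarrow> norm x = norm y"
      using NR by blast
    have A: "z = 0" if "z \<in> orthogonal_comp W1" "z \<in> orthogonal_comp W2" for z
    proof -
      have h1: "?P1 z = 0" using that(1) by (simp add: op_zero_iff[OF assms(1)])
      have h2: "?P2 z = 0" using that(2) by (simp add: op_zero_iff[OF assms(2)])
      have h3: "?P1 0 = 0"
        by (simp add: op_zero_iff[OF assms(1)] subspace_0[OF subspace_orthogonal_comp])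
      have h4: "?P2 0 = 0"
        by (simp add: op_zero_iff[OF assms(2)] subspace_0[OF subspace_orthogonal_comp])
      have "norm z = norm (0::real^'n)" by (rule nr) (simp_all add: h1 h2 h3 h4)
      then show ?thesis by simp
    qed
    obtain v where v: "v \<in> orthogonal_comp W1" "v \<noteq> 0" using comp_nonzero assms(1,3) by blast
    obtain w where w: "w \<in> orthogonal_comp W2" "w \<noteq> 0" using comp_nonzero assms(2,4) by blast
    have P2v: "?P2 v \<noteq> 0" using v A[of v] by (auto simp add: op_zero_iff[OF assms(2)])
    have P1w: "?P1 w \<noteq> 0" using w A[of w] by (auto simp add: op_zero_iff[OF assms(1)])
    have P1v: "?P1 v = 0" using v by (simp add: op_zero_iff[OF assms(1)])
    have P2w: "?P2 w = 0" using w by (simp add: op_zero_iff[OF assms(2)])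
    have key: "?P2 x = 0" if x: "x \<in> W1" for x
    proof (rule ccontr)
      assume ne: "?P2 x \<noteq> 0"
      define a where "a = norm x"
      define b where "b = norm (?P2 x)"
      have b0: "b > 0" using ne b_def by simp
      define s where "s = b / norm (?P2 v)"
      define \<sigma> where "\<sigma> = (if v \<bullet> w \<ge> 0 then (1::real) else -1)"
      define t where "t = \<sigma> * (a / norm (?P1 w))"
      define y where "y = s *\<^sub>R v + t *\<^sub>R w"
      have P1y: "?P1 y = t *\<^sub>R ?P1 w" unfolding y_def using op_lin[OF assms(1)] P1v by simp
      have P2y: "?P2 y = s *\<^sub>R ?P2 v" unfolding y_def using op_lin[OF assms(2)] P2w by simp
      have "norm (?P1 y) = a" using P1y P1w by (simp add: t_def \<sigma>_def a_def)
      moreover have "?P1 x = x" using op_unique[OF assms(1) x, of x] assms(1)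
        by (simp add: subspace_0 subspace_orthogonal_comp)
      ultimately have e1: "norm (?P1 y) = norm (?P1 x)" using a_def by simp
      have e2: "norm (?P2 y) = norm (?P2 x)" using P2y P2v b0 by (simp add: s_def b_def)
      have eq: "norm y = norm x" using e1 e2 by (rule nr)
      have st: "s * t * (v \<bullet> w) \<ge> 0"
      proof -
        have "s \<ge> 0" using b0 by (simp add: s_def)
        moreover have "t * (v \<bullet> w) \<ge> 0"
        proof -
          have g1: "\<sigma> * (v \<bullet> w) \<ge> 0" by (simp add: \<sigma>_def)
          have g2: "a / norm (?P1 w) \<ge> 0" by (simp add: a_def)
          have "t * (v \<bullet> w) = (a / norm (?P1 w)) * (\<sigma> * (v \<bullet> w))" by (simp add: t_def)
          then show ?thesis using mult_nonneg_nonneg[OF g2 g1] by linarith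
        qed
        ultimately show ?thesis by (metis mult.assoc mult_nonneg_nonneg)
      qed
      have ny: "norm y ^ 2 = s^2 * norm v ^ 2 + t^2 * norm w ^ 2 + 2 * (s * t * (v \<bullet> w))"
        unfolding y_def by (rule norm_comb_sq)
      have le2: "norm (?P2 v) ^ 2 \<le> norm v ^ 2" using op_le[OF assms(2)] .
      have sv: "s^2 * norm v ^ 2 \<ge> b^2"
        unfolding s_def by (rule div_sq_ge[OF le2]) (use P2v in simp)
      have le1: "norm (?P1 w) ^ 2 \<le> norm w ^ 2" using op_le[OF assms(1)] .
      have t2: "t^2 = (a / norm (?P1 w))^2"
        by (simp add: t_def \<sigma>_def power_mult_distrib)
      have "(a / norm (?P1 w))^2 * norm w ^ 2 \<ge> a^2"
        by (rule div_sq_ge[OF le1]) (use P1w in simp)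
      then have tw: "t^2 * norm w ^ 2 \<ge> a^2" by (simp only: t2)
      have "b^2 > 0" using b0 by simp
      then have "norm y ^ 2 > a ^ 2" using ny st sv tw by linarith
      then show False using eq a_def by simp
    qed
    have sub: "W2 \<subseteq> orthogonal_comp W1"
    proof
      fix z assume z: "z \<in> W2"
      have "z \<bullet> x = 0" if "x \<in> W1" for x
      proof -
        have "x \<in> orthogonal_comp W2" using key[OF that] by (simp add: op_zero_iff[OF assms(2)])
        then have "x \<bullet> z = 0" using z by (rule orth_comp_inner)
        then show ?thesis by (simp add: inner_commute)
      qed
      then show "z \<in> orthogonal_comp W1"
        unfolding orthogonal_comp_def orthogonal_def by (simp add: inner_commute)
    qed
    have "orthogonal_comp W1 \<subseteq> W2"
    proof
      fix z assume z: "z \<in> orthogonal_comp W1"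
      have c: "?P2 z \<in> W2 \<and> z - ?P2 z \<in> orthogonal_comp W2" using op_char[OF assms(2)] .
      have "z - ?P2 z \<in> orthogonal_comp W1"
        using subspace_diff[OF subspace_orthogonal_comp z subsetD[OF sub conjunct1[OF c]]] .
      then have "z - ?P2 z = 0" using conjunct2[OF c] by (rule A)
      then show "z \<in> W2" using c by simp
    qed
    then show "W2 = orthogonal_comp W1" using sub by blast
  next
    assume W2: "W2 = orthogonal_comp W1"
    have P2eq: "?P2 x = x - ?P1 x" for x
    proof (rule op_unique[OF assms(2)])
      have c: "?P1 x \<in> W1 \<and> x - ?P1 x \<in> orthogonal_comp W1" by (rule op_char[OF assms(1)])
      then show "x - ?P1 x \<in> W2" unfolding W2 by (rule conjunct2)
      have "?P1 x \<in> orthogonal_comp (orthogonal_comp W1)"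
        by (rule subsetD[OF orthogonal_comp_subset[of W1] conjunct1[OF c]])
      then have "?P1 x \<in> orthogonal_comp W2" unfolding W2 .
      then show "x - (x - ?P1 x) \<in> orthogonal_comp W2" by simp
    qed
    have h: "norm x ^ 2 = norm (?P1 x) ^ 2 + norm (?P2 x) ^ 2" for x
    proof -
      have "norm x ^ 2 = norm (?P1 x) ^ 2 + norm (x - ?P1 x) ^ 2" by (rule op_pyth[OF assms(1)])
      moreover have "?P2 x = x - ?P1 x" by (rule P2eq)
      ultimately show ?thesis by (simp only:)
    qed
    have "norm x = norm y" if "norm (?P1 x) = norm (?P1 y)" "norm (?P2 x) = norm (?P2 y)" for x y
    proof -
      have "norm x ^ 2 = norm y ^ 2" unfolding h[of x] h[of y] that by (rule refl)
      then show ?thesis by (simp add: power2_eq_iff_nonneg)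
    qed
    then show "norm_retrieval {1::nat, 2} (\<lambda>i. if i = 1 then W1 else W2)" unfolding NR by blast
  qed
qed

end
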